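(* Let $(\lambda_0,\dots,\lambda_n)\in\mathbb{C}^{n+1}$ and assume $E_{(\lambda_0,\dots,\lambda_n)}$ is closed under complex conjugation. Let $M_n:=\max\{|\mathrm{Im}\,\lambda_j|: j=0,\dots,n\}$. Then for all real $a<b$ with $b-a<\pi/M_n$ (interpreted as no restriction when $M_n=0$), $E_{(\lambda_0,\dots,\lambda_n)}$ is an extended Chebyshev system over the interval $[a,b]$.
   Context: $E_{(\lambda_0,\dots,\lambda_n)}$ denotes the space of all $f\in C^\infty(\mathbb{R},\mathbb{C})$ with $(\frac{d}{dx}-\lambda_0)\cdots(\frac{d}{dx}-\lambda_n)f=0$ (dimension $n+1$). A zero of order $k$ at $a$ means $f(a)=\dots=f^{(k-1)}(a)=0$, $f^{(k)}(a)\ne0$. $E_{(\lambda_0,\dots,\lambda_n)}$ is an extended Chebyshev system over a set $A\subset\mathbb{R}$ if every nonzero element has at most $n$ zeros in $A$ counted with multiplicity. Closed under complex conjugation means $\overline f\in E_{(\lambda_0,\dots,\lambda_n)}$ whenever $f\in E_{(\lambda_0,\dots,\lambda_n)}$. *)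

theory Defs
  imports "HOL-Analysis.Analysis"
begin

fun vderiv :: "nat \<Rightarrow> (real \<Rightarrow> complex) \<Rightarrow> real \<Rightarrow> complex" where
  "vderiv 0 f = f"
| "vderiv (Suc k) f = (\<lambda>x. vector_derivative (vderiv k f) (at x))"

definition smooth_fun :: "(real \<Rightarrow> complex) \<Rightarrow> bool" where
  "smooth_fun f \<longleftrightarrow> (\<forall>k x. vderiv k f differentiable (at x))"

definition shift_op :: "complex \<Rightarrow> (real \<Rightarrow> complex) \<Rightarrow> real \<Rightarrow> complex" where
  "shift_op c g = (\<lambda>x. vector_derivative g (at x) - c * g x)"

fun diff_op :: "(nat \<Rightarrow> complex) \<Rightarrow> nat \<Rightarrow> (real \<Rightarrow> complex) \<Rightarrow> real \<Rightarrow> complex" where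
  "diff_op lam 0 f = shift_op (lam 0) f"
| "diff_op lam (Suc n) f = diff_op lam n (shift_op (lam (Suc n)) f)"

definition E_space :: "(nat \<Rightarrow> complex) \<Rightarrow> nat \<Rightarrow> (real \<Rightarrow> complex) set" where
  "E_space lam n = {f. smooth_fun f \<and> diff_op lam n f = (\<lambda>x. 0)}"

definition zero_of_order :: "(real \<Rightarrow> complex) \<Rightarrow> real \<Rightarrow> nat \<Rightarrow> bool" where
  "zero_of_order f a k \<longleftrightarrow> (\<forall>i<k. vderiv i f a = 0) \<and> vderiv k f a \<noteq> 0"

text \<open>Every nonzero element has at most n zeros in A counted with multiplicity:
  for any finite set of points of A, the orders of the zeros there sum to at most n.
  (Points where f vanishes to infinite order would count as infinitely many zeros;
  we express this by allowing any lower bounds m x on the vanishing order.)\<close>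
definition ext_chebyshev :: "(real \<Rightarrow> complex) set \<Rightarrow> nat \<Rightarrow> real set \<Rightarrow> bool" where
  "ext_chebyshev E n A \<longleftrightarrow>
     (\<forall>f\<in>E. f \<noteq> (\<lambda>x. 0) \<longrightarrow>
        (\<forall>S m. finite S \<and> S \<subseteq> A \<and> (\<forall>x\<in>S. \<forall>i<m x. vderiv i f x = 0)
               \<longrightarrow> sum m S \<le> n))"

definition closed_cnj :: "(real \<Rightarrow> complex) set \<Rightarrow> bool" where
  "closed_cnj E \<longleftrightarrow> (\<forall>f\<in>E. (\<lambda>x. cnj (f x)) \<in> E)"

end

theory Submission
  imports Defs
begin


abbreviation dv :: "(real \<Rightarrow> complex) \<Rightarrow> real \<Rightarrow> complex" where
  "dv f \<equiv> (\<lambda>x. vector_derivative f (at x))"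

lemma vderiv_Suc': "vderiv (Suc k) f = vderiv k (dv f)"
  by (induction k) auto

lemma smooth_differentiable: "smooth_fun f \<Longrightarrow> f differentiable (at x)"
  unfolding smooth_fun_def by (metis vderiv.simps(1))

lemma smooth_hvd: "smooth_fun f \<Longrightarrow> (f has_vector_derivative dv f x) (at x)"
  using smooth_differentiable vector_derivative_works by blast

lemma smooth_dv: "smooth_fun f \<Longrightarrow> smooth_fun (dv f)"
  unfolding smooth_fun_def by (metis vderiv_Suc')

lemma smooth_vderiv_diff: "smooth_fun f \<Longrightarrow> vderiv k f differentiable (at x)"
  unfolding smooth_fun_def by blast

lemma dv_add: "f differentiable (at x) \<Longrightarrow> g differentiable (at x) \<Longrightarrow>
   vector_derivative (\<lambda>x. f x + g x) (at x) = dv f x + dv g x"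
  by (intro vector_derivative_at has_vector_derivative_add) (auto simp: vector_derivative_works[symmetric])

lemma dv_cmult: "f differentiable (at x) \<Longrightarrow>
   vector_derivative (\<lambda>x. c * f x) (at x) = c * dv f x"
  by (intro vector_derivative_at has_vector_derivative_mult_right) (auto simp: vector_derivative_works[symmetric])

lemma dv_mult: "f differentiable (at x) \<Longrightarrow> g differentiable (at x) \<Longrightarrow>
   vector_derivative (\<lambda>x. f x * g x) (at x) = dv f x * g x + f x * dv g x"
proof -
  assume a: "f differentiable (at x)" "g differentiable (at x)"
  have "((\<lambda>x. f x * g x) has_vector_derivative (f x * dv g x + dv f x * g x)) (at x)"
    by (intro has_vector_derivative_mult) (use a in \<open>auto simp: vector_derivative_works[symmetric]\<close>)
  from vector_derivative_at[OF this] show ?thesis by simp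
qed

lemma dv_cnj: "f differentiable (at x) \<Longrightarrow>
   vector_derivative (\<lambda>x. cnj (f x)) (at x) = cnj (dv f x)"
  by (rule vector_derivative_cnj)

lemma diff_add: "f differentiable (at x) \<Longrightarrow> g differentiable (at x) \<Longrightarrow> (\<lambda>x. f x + g x) differentiable (at x)"
  by (rule differentiable_add)

lemma hvd: "f differentiable (at x) \<Longrightarrow> (f has_vector_derivative dv f x) (at x)"
  by (rule iffD1[OF vector_derivative_works])

lemma diff_cmult: fixes f :: "real \<Rightarrow> complex" assumes "f differentiable (at x)" shows "(\<lambda>x. c * f x) differentiable (at x)"
proof -
  have "((\<lambda>x. c * f x) has_vector_derivative c * dv f x) (at x)"
    using has_vector_derivative_mult_right[OF hvd[OF assms]] .
  then show ?thesis by (rule differentiableI_vector)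
qed

lemma diff_mult: fixes f g :: "real \<Rightarrow> complex" assumes "f differentiable (at x)" "g differentiable (at x)" shows "(\<lambda>x. f x * g x) differentiable (at x)"
proof -
  have "((\<lambda>x. f x * g x) has_vector_derivative (f x * dv g x + dv f x * g x)) (at x)"
    using has_vector_derivative_mult[OF hvd[OF assms(1)] hvd[OF assms(2)]] .
  then show ?thesis by (rule differentiableI_vector)
qed

lemma diff_cnj: fixes f :: "real \<Rightarrow> complex" assumes "f differentiable (at x)" shows "(\<lambda>x. cnj (f x)) differentiable (at x)"
proof -
  have "((\<lambda>x. cnj (f x)) has_vector_derivative cnj (dv f x)) (at x)"
    using has_vector_derivative_cnj[OF hvd[OF assms]] .
  then show ?thesis by (rule differentiableI_vector)
qed

lemma vderiv_add_upto:
  "(\<forall>j<k. \<forall>x. vderiv j f differentiable (at x)) \<Longrightarrow> (\<forall>j<k. \<forall>x. vderiv j g differentiable (at x)) \<Longrightarrow>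
   vderiv k (\<lambda>x. f x + g x) = (\<lambda>x. vderiv k f x + vderiv k g x)"
proof (induction k arbitrary: f g)
  case 0 then show ?case by simp
next
  case (Suc k)
  have "dv (\<lambda>x. f x + g x) = (\<lambda>x. dv f x + dv g x)"
    using Suc.prems by (intro ext dv_add) (metis vderiv.simps(1) zero_less_Suc)+
  then have "vderiv (Suc k) (\<lambda>x. f x + g x) = vderiv k (\<lambda>x. dv f x + dv g x)"
    by (simp only: vderiv_Suc')
  also have "\<dots> = (\<lambda>x. vderiv k (dv f) x + vderiv k (dv g) x)"
    using Suc.prems by (intro Suc.IH) (auto simp flip: vderiv_Suc')
  finally show ?case unfolding vderiv_Suc'[of k f] vderiv_Suc'[of k g] vderiv_Suc'[of k "\<lambda>x. f x + g x"] .
qed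

lemma vderiv_add: "smooth_fun f \<Longrightarrow> smooth_fun g \<Longrightarrow>
   vderiv k (\<lambda>x. f x + g x) = (\<lambda>x. vderiv k f x + vderiv k g x)"
  unfolding smooth_fun_def by (intro vderiv_add_upto) blast+

lemma smooth_add: assumes "smooth_fun f" "smooth_fun g" shows "smooth_fun (\<lambda>x. f x + g x)"
  unfolding smooth_fun_def
proof (intro allI)
  fix k x show "vderiv k (\<lambda>x. f x + g x) differentiable (at x)"
    unfolding vderiv_add[OF assms] using assms by (intro diff_add smooth_vderiv_diff)
qed

lemma vderiv_cmult: "smooth_fun f \<Longrightarrow> vderiv k (\<lambda>x. c * f x) = (\<lambda>x. c * vderiv k f x)"
proof (induction k arbitrary: f)
  case 0 then show ?case by simp
next
  case (Suc k)
  have "dv (\<lambda>x. c * f x) = (\<lambda>x. c * dv f x)"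
    using Suc.prems by (intro ext dv_cmult smooth_differentiable)
  moreover have "vderiv k (\<lambda>x. c * dv f x) = (\<lambda>x. c * vderiv k (dv f) x)"
    using Suc.IH[OF smooth_dv[OF Suc.prems]] .
  ultimately show ?case by (simp only: vderiv_Suc')
qed

lemma smooth_cmult: assumes "smooth_fun f" shows "smooth_fun (\<lambda>x. c * f x)"
  unfolding smooth_fun_def
proof (intro allI)
  fix k x show "vderiv k (\<lambda>x. c * f x) differentiable (at x)"
    unfolding vderiv_cmult[OF assms] using assms by (intro diff_cmult smooth_vderiv_diff)
qed

lemma vderiv_cnj: "smooth_fun f \<Longrightarrow> vderiv k (\<lambda>x. cnj (f x)) = (\<lambda>x. cnj (vderiv k f x))"
proof (induction k arbitrary: f)
  case 0 then show ?case by simp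
next
  case (Suc k)
  have "dv (\<lambda>x. cnj (f x)) = (\<lambda>x. cnj (dv f x))"
    using Suc.prems by (intro ext dv_cnj smooth_differentiable)
  moreover have "vderiv k (\<lambda>x. cnj (dv f x)) = (\<lambda>x. cnj (vderiv k (dv f) x))"
    using Suc.IH[OF smooth_dv[OF Suc.prems]] .
  ultimately show ?case by (simp only: vderiv_Suc')
qed

lemma smooth_cnj: assumes "smooth_fun f" shows "smooth_fun (\<lambda>x. cnj (f x))"
  unfolding smooth_fun_def
proof (intro allI)
  fix k x show "vderiv k (\<lambda>x. cnj (f x)) differentiable (at x)"
    unfolding vderiv_cnj[OF assms] using assms by (intro diff_cnj smooth_vderiv_diff)
qed

lemma smooth_mult_aux:
  "\<forall>f g. smooth_fun f \<longrightarrow> smooth_fun g \<longrightarrow> (\<forall>j\<le>k. \<forall>x. vderiv j (\<lambda>x. f x * g x) differentiable (at x))"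
proof (induction k)
  case 0
  then show ?case by (auto intro: diff_mult smooth_differentiable)
next
  case (Suc k)
  show ?case
  proof (intro allI impI)
    fix f g j x assume f: "smooth_fun f" and g: "smooth_fun g" and j: "j \<le> Suc k"
    show "vderiv j (\<lambda>x. f x * g x) differentiable (at x)"
    proof (cases "j \<le> k")
      case True then show ?thesis using Suc f g by blast
    next
      case False
      then have jj: "j = Suc k" using j by simp
      have e: "dv (\<lambda>x. f x * g x) = (\<lambda>x. dv f x * g x + f x * dv g x)"
        using f g by (intro ext dv_mult smooth_differentiable)
      have "vderiv (Suc k) (\<lambda>x. f x * g x) = vderiv k (\<lambda>x. dv f x * g x + f x * dv g x)"
        by (simp only: vderiv_Suc' e)
      also have "\<dots> = (\<lambda>x. vderiv k (\<lambda>x. dv f x * g x) x + vderiv k (\<lambda>x. f x * dv g x) x)"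
        using Suc.IH f g smooth_dv[OF f] smooth_dv[OF g] by (intro vderiv_add_upto) auto
      finally show ?thesis unfolding jj
        using Suc.IH f g smooth_dv[OF f] smooth_dv[OF g] by (auto intro!: diff_add)
    qed
  qed
qed

lemma smooth_mult: "smooth_fun f \<Longrightarrow> smooth_fun g \<Longrightarrow> smooth_fun (\<lambda>x. f x * g x)"
  unfolding smooth_fun_def using smooth_mult_aux[unfolded smooth_fun_def] by blast

lemma smooth_const: "smooth_fun (\<lambda>x. c)"
proof -
  have "vderiv k (\<lambda>x. c) = (if k = 0 then (\<lambda>x. c) else (\<lambda>x. 0))" for k
    by (induction k) (auto intro!: vector_derivative_at)
  then show ?thesis unfolding smooth_fun_def by auto
qed

lemma smooth_exp: "smooth_fun (\<lambda>x. exp (c * of_real x))"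
proof -
  have d: "((\<lambda>x. exp (c * of_real x)) has_vector_derivative c * exp (c * of_real x)) (at x)" for x
    by (rule has_vector_derivative_real_field) (auto intro!: derivative_eq_intros)
  have "vderiv k (\<lambda>x. exp (c * of_real x)) = (\<lambda>x. c ^ k * exp (c * of_real x))" for k
  proof (induction k)
    case (Suc k)
    have "((\<lambda>x. c ^ k * exp (c * complex_of_real x)) has_vector_derivative c ^ k * (c * exp (c * complex_of_real x))) (at x)" for x
      by (rule has_vector_derivative_mult_right[OF d])
    then show ?case by (auto simp: Suc mult_ac intro!: ext vector_derivative_at)
  qed simp
  moreover have "(\<lambda>x. c ^ k * exp (c * of_real x)) differentiable (at x)" for k x
    by (intro diff_cmult differentiableI_vector[OF d])
  ultimately show ?thesis unfolding smooth_fun_def by auto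
qed



lemma dv_diff: "f differentiable (at x) \<Longrightarrow> g differentiable (at x) \<Longrightarrow>
   vector_derivative (\<lambda>x. f x - g x) (at x) = dv f x - dv g x"
  by (intro vector_derivative_at has_vector_derivative_diff hvd)

lemma vderiv_diff: assumes "smooth_fun f" "smooth_fun g"
  shows "vderiv k (\<lambda>x. f x - g x) = (\<lambda>x. vderiv k f x - vderiv k g x)"
proof -
  have e: "(\<lambda>x. f x - g x) = (\<lambda>x. f x + (-1) * g x)" by simp
  show ?thesis unfolding e vderiv_add[OF assms(1) smooth_cmult[OF assms(2)]] vderiv_cmult[OF assms(2)]
    by simp
qed

lemma smooth_diff: assumes "smooth_fun f" "smooth_fun g" shows "smooth_fun (\<lambda>x. f x - g x)"
proof -
  have e: "(\<lambda>x. f x - g x) = (\<lambda>x. f x + (-1) * g x)" by simp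
  show ?thesis unfolding e by (intro smooth_add smooth_cmult assms)
qed

lemma shift_op_alt: "shift_op c f = (\<lambda>x. dv f x - c * f x)"
  by (simp add: shift_op_def)

lemma smooth_shift: "smooth_fun f \<Longrightarrow> smooth_fun (shift_op c f)"
  unfolding shift_op_alt by (intro smooth_diff smooth_dv smooth_cmult)

lemma smooth_diff_op: "smooth_fun f \<Longrightarrow> smooth_fun (diff_op lam n f)"
  by (induction n arbitrary: f) (auto intro: smooth_shift)

lemma shift_commute: assumes "smooth_fun f"
  shows "shift_op c (shift_op d f) = shift_op d (shift_op c f)"
proof -
  have f1: "f differentiable (at x)" and f2: "dv f differentiable (at x)" for x
    using assms smooth_differentiable smooth_dv by blast+
  have "dv (\<lambda>x. dv f x - e * f x) x = dv (dv f) x - e * dv f x" for e x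
    using f1 f2 by (simp add: dv_diff dv_cmult diff_cmult)
  then show ?thesis unfolding shift_op_alt by (auto simp: algebra_simps)
qed

lemma shift_diff_op_commute: "smooth_fun f \<Longrightarrow> shift_op c (diff_op lam k f) = diff_op lam k (shift_op c f)"
proof (induction k arbitrary: f)
  case 0 then show ?case by (simp add: shift_commute)
next
  case (Suc k)
  have "shift_op c (diff_op lam (Suc k) f) = diff_op lam k (shift_op c (shift_op (lam (Suc k)) f))"
    using Suc.IH[OF smooth_shift[OF Suc.prems]] by simp
  also have "\<dots> = diff_op lam (Suc k) (shift_op c f)"
    using shift_commute[OF Suc.prems] by simp
  finally show ?case .
qed

lemma diff_op_commute: "smooth_fun f \<Longrightarrow> diff_op A k (diff_op B l f) = diff_op B l (diff_op A k f)"
proof (induction k arbitrary: f)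
  case 0 then show ?case by (simp add: shift_diff_op_commute)
next
  case (Suc k)
  have "diff_op A (Suc k) (diff_op B l f) = diff_op A k (diff_op B l (shift_op (A (Suc k)) f))"
    using shift_diff_op_commute[OF Suc.prems] by simp
  also have "\<dots> = diff_op B l (diff_op A (Suc k) f)"
    using Suc.IH[OF smooth_shift[OF Suc.prems]] by simp
  finally show ?case .
qed

lemma diff_op_cong: "(\<And>j. j \<le> m \<Longrightarrow> A j = B j) \<Longrightarrow> diff_op A m f = diff_op B m f"
  by (induction m arbitrary: f) auto

lemma diff_op_Suc_outer: "smooth_fun f \<Longrightarrow> diff_op lam (Suc m) f = shift_op (lam (Suc m)) (diff_op lam m f)"
  by (simp add: shift_diff_op_commute)

definition rem :: "nat \<Rightarrow> (nat \<Rightarrow> complex) \<Rightarrow> nat \<Rightarrow> complex" where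
  "rem k lam j = (if j < k then lam j else lam (Suc j))"

lemma diff_op_remove:
  "k \<le> Suc m \<Longrightarrow> smooth_fun g \<Longrightarrow> diff_op lam (Suc m) g = diff_op (rem k lam) m (shift_op (lam k) g)"
proof (induction m arbitrary: k g)
  case 0
  then consider "k = 0" | "k = 1" by linarith
  then show ?case
  proof cases
    case 1 then show ?thesis using shift_commute[OF "0.prems"(2)] by (simp add: rem_def)
  next
    case 2 then show ?thesis by (simp add: rem_def)
  qed
next
  case (Suc m)
  show ?case
  proof (cases "k = Suc (Suc m)")
    case True
    have "diff_op lam (Suc m) = diff_op (rem k lam) (Suc m)"
      by (intro ext diff_op_cong) (auto simp: rem_def True)
    then show ?thesis using True by simp
  next
    case False
    then have k: "k \<le> Suc m" using Suc.prems by simp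
    have "diff_op lam (Suc (Suc m)) g = diff_op lam (Suc m) (shift_op (lam (Suc (Suc m))) g)" by simp
    also have "\<dots> = diff_op (rem k lam) m (shift_op (lam k) (shift_op (lam (Suc (Suc m))) g))"
      by (rule Suc.IH[OF k smooth_shift[OF Suc.prems(2)]])
    also have "\<dots> = diff_op (rem k lam) m (shift_op (lam (Suc (Suc m))) (shift_op (lam k) g))"
      using shift_commute[OF Suc.prems(2)] by simp
    also have "\<dots> = diff_op (rem k lam) (Suc m) (shift_op (lam k) g)"
      using k by (simp add: rem_def)
    finally show ?thesis .
  qed
qed

lemma shift_cnj: assumes "smooth_fun f"
  shows "shift_op (cnj c) (\<lambda>x. cnj (f x)) = (\<lambda>x. cnj (shift_op c f x))"
  unfolding shift_op_alt using assms by (auto simp: dv_cnj smooth_differentiable)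

lemma diff_op_cnj: "smooth_fun f \<Longrightarrow>
  diff_op (\<lambda>j. cnj (lam j)) k (\<lambda>x. cnj (f x)) = (\<lambda>x. cnj (diff_op lam k f x))"
proof (induction k arbitrary: f)
  case 0 then show ?case by (simp add: shift_cnj)
next
  case (Suc k)
  show ?case using Suc.IH[OF smooth_shift[OF Suc.prems]] shift_cnj[OF Suc.prems] by simp
qed

lemma hvd_exp: "((\<lambda>x. exp ((c::complex) * of_real x)) has_vector_derivative c * exp (c * of_real x)) (at x)"
  by (rule has_vector_derivative_real_field) (auto intro!: derivative_eq_intros)

lemma dv_exp: "dv (\<lambda>x. C * exp (c * of_real x)) x = C * (c * exp (c * of_real x))"
  by (intro vector_derivative_at has_vector_derivative_mult_right hvd_exp)

lemma diff_op_exp: "diff_op lam k (\<lambda>x. C * exp (mu * of_real x)) =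
    (\<lambda>x. (C * (\<Prod>j\<le>k. (mu - lam j))) * exp (mu * of_real x))"
proof (induction k arbitrary: C)
  case 0 then show ?case by (simp add: shift_op_alt dv_exp algebra_simps)
next
  case (Suc k)
  have "shift_op (lam (Suc k)) (\<lambda>x. C * exp (mu * of_real x)) = (\<lambda>x. (C * (mu - lam (Suc k))) * exp (mu * of_real x))"
    by (simp add: shift_op_alt dv_exp algebra_simps)
  then have "diff_op lam (Suc k) (\<lambda>x. C * exp (mu * of_real x)) =
     diff_op lam k (\<lambda>x. (C * (mu - lam (Suc k))) * exp (mu * of_real x))" by simp
  also have "\<dots> = (\<lambda>x. (C * (mu - lam (Suc k)) * (\<Prod>j\<le>k. (mu - lam j))) * exp (mu * of_real x))"
    by (rule Suc.IH)
  finally show ?case by (simp add: prod.atMost_Suc mult_ac)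
qed

lemma shift_add: assumes "smooth_fun f" "smooth_fun g"
  shows "shift_op c (\<lambda>x. f x + g x) = (\<lambda>x. shift_op c f x + shift_op c g x)"
  unfolding shift_op_alt using assms by (auto simp: dv_add smooth_differentiable algebra_simps)

lemma shift_cmult: assumes "smooth_fun f"
  shows "shift_op c (\<lambda>x. e * f x) = (\<lambda>x. e * shift_op c f x)"
  unfolding shift_op_alt using assms by (auto simp: dv_cmult smooth_differentiable algebra_simps)

lemma diff_op_add: "smooth_fun f \<Longrightarrow> smooth_fun g \<Longrightarrow>
   diff_op lam k (\<lambda>x. f x + g x) = (\<lambda>x. diff_op lam k f x + diff_op lam k g x)"
proof (induction k arbitrary: f g)
  case 0 then show ?case by (simp add: shift_add)
next
  case (Suc k)
  show ?case using Suc.IH[OF smooth_shift[OF Suc.prems(1)] smooth_shift[OF Suc.prems(2)]]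
      shift_add[OF Suc.prems] by simp
qed

lemma diff_op_cmult: "smooth_fun f \<Longrightarrow>
   diff_op lam k (\<lambda>x. e * f x) = (\<lambda>x. e * diff_op lam k f x)"
proof (induction k arbitrary: f)
  case 0 then show ?case by (simp add: shift_cmult)
next
  case (Suc k)
  show ?case using Suc.IH[OF smooth_shift[OF Suc.prems(1)]] shift_cmult[OF Suc.prems] by simp
qed

lemma first_order:
  assumes g: "\<And>x. g differentiable (at x)" and z: "shift_op mu g = (\<lambda>x. 0)"
  shows "g x = g 0 * exp (mu * of_real x)"
proof -
  define k where "k = (\<lambda>x. exp (- mu * of_real x) * g x)"
  have "(k has_vector_derivative 0) (at x within UNIV)" for x
  proof -
    have "(k has_vector_derivative (exp (- mu * of_real x) * dv g x + (- mu * exp (- mu * of_real x)) * g x)) (at x)"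
      unfolding k_def by (intro has_vector_derivative_mult hvd_exp hvd g)
    moreover have "dv g x = mu * g x" using fun_cong[OF z, of x] by (simp add: shift_op_alt)
    ultimately show ?thesis by (simp add: algebra_simps)
  qed
  then obtain c where c: "\<And>x. k x = c" using has_vector_derivative_zero_constant[of UNIV k] by auto
  have "g x = exp (mu * of_real x) * k x" unfolding k_def by (simp add: exp_minus_inverse mult.assoc[symmetric] exp_add[symmetric])
  also have "\<dots> = exp (mu * of_real x) * k 0" by (simp add: c)
  finally show ?thesis by (simp add: k_def)
qed



definition Zb :: "(real \<Rightarrow> complex) \<Rightarrow> real \<Rightarrow> real \<Rightarrow> nat \<Rightarrow> bool" where
  "Zb f a b K \<longleftrightarrow> (\<forall>S m. finite S \<and> S \<subseteq> {a..b} \<and> (\<forall>x\<in>S. \<forall>i<m x. vderiv i f x = 0) \<longrightarrow> sum m S \<le> K)"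

definition realf :: "(real \<Rightarrow> complex) \<Rightarrow> bool" where
  "realf f \<longleftrightarrow> (\<forall>x. Im (f x) = 0)"

lemma Zb_mono: "Zb f a b K \<Longrightarrow> K \<le> K' \<Longrightarrow> Zb f a b K'"
  unfolding Zb_def by (meson le_trans)

lemma Zb_nonzero: assumes "\<And>x. x \<in> {a..b} \<Longrightarrow> f x \<noteq> 0" shows "Zb f a b 0"
  unfolding Zb_def
proof (intro allI impI)
  fix S m assume h: "finite S \<and> S \<subseteq> {a..b} \<and> (\<forall>x\<in>S. \<forall>i<m x. vderiv i f x = 0)"
  have "m x = 0" if "x \<in> S" for x
  proof (rule ccontr)
    assume "m x \<noteq> 0"
    then have "vderiv 0 f x = 0" using h that by blast
    then show False using assms h that by auto
  qed
  then show "sum m S \<le> 0" by simp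
qed

lemma leibniz_zero:
  "smooth_fun p \<Longrightarrow> smooth_fun \<phi> \<Longrightarrow> (\<forall>i<m. vderiv i \<phi> x = 0) \<Longrightarrow>
   (\<forall>i<m. vderiv i (\<lambda>y. p y * \<phi> y) x = 0)"
proof (induction m arbitrary: p \<phi>)
  case 0 then show ?case by simp
next
  case (Suc m)
  show ?case
  proof (intro allI impI)
    fix i assume i: "i < Suc m"
    show "vderiv i (\<lambda>y. p y * \<phi> y) x = 0"
    proof (cases i)
      case 0 then show ?thesis using Suc.prems by auto
    next
      case (Suc i')
      have e: "dv (\<lambda>y. p y * \<phi> y) = (\<lambda>y. dv p y * \<phi> y + p y * dv \<phi> y)"
        using Suc.prems by (intro ext dv_mult smooth_differentiable)
      have sp: "smooth_fun (dv p)" "smooth_fun (dv \<phi>)" using Suc.prems smooth_dv by auto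
      have "vderiv i (\<lambda>y. p y * \<phi> y) = vderiv i' (\<lambda>y. dv p y * \<phi> y + p y * dv \<phi> y)"
        unfolding Suc vderiv_Suc' e ..
      also have "\<dots> = (\<lambda>y. vderiv i' (\<lambda>y. dv p y * \<phi> y) y + vderiv i' (\<lambda>y. p y * dv \<phi> y) y)"
        using Suc.prems sp by (intro vderiv_add smooth_mult)
      finally have eq: "vderiv i (\<lambda>y. p y * \<phi> y) x = vderiv i' (\<lambda>y. dv p y * \<phi> y) x + vderiv i' (\<lambda>y. p y * dv \<phi> y) x"
        by simp
      have z1: "\<forall>j<m. vderiv j \<phi> x = 0" using Suc.prems by auto
      have z2: "\<forall>j<m. vderiv j (dv \<phi>) x = 0" using Suc.prems by (auto simp flip: vderiv_Suc')
      have "i' < m" using i Suc by simp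
      then show ?thesis unfolding eq
        using Suc.IH[OF sp(1) Suc.prems(2) z1] Suc.IH[OF Suc.prems(1) sp(2) z2] by simp
    qed
  qed
qed

lemma local_div:
  "smooth_fun w \<Longrightarrow> smooth_fun h \<Longrightarrow> w x \<noteq> 0 \<Longrightarrow> (\<forall>i<m. vderiv i (\<lambda>y. w y * h y) x = 0) \<Longrightarrow>
   (\<forall>i<m. vderiv i h x = 0)"
proof (induction m arbitrary: h)
  case 0 then show ?case by simp
next
  case (Suc m)
  have sw: "smooth_fun (dv w)" and sh: "smooth_fun (dv h)" using Suc.prems smooth_dv by auto
  have hm: "\<forall>i<m. vderiv i h x = 0" using Suc.IH[OF Suc.prems(1,2,3)] Suc.prems(4) by simp
  have a: "\<forall>i<m. vderiv i (\<lambda>y. dv w y * h y) x = 0"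
    by (rule leibniz_zero[OF sw Suc.prems(2) hm])
  have e: "dv (\<lambda>y. w y * h y) = (\<lambda>y. dv w y * h y + w y * dv h y)"
    using Suc.prems by (intro ext dv_mult smooth_differentiable)
  have b: "\<forall>i<m. vderiv i (\<lambda>y. w y * dv h y) x = 0"
  proof (intro allI impI)
    fix i assume i: "i < m"
    have "vderiv (Suc i) (\<lambda>y. w y * h y) = vderiv i (\<lambda>y. dv w y * h y + w y * dv h y)"
      unfolding vderiv_Suc' e ..
    also have "\<dots> = (\<lambda>y. vderiv i (\<lambda>y. dv w y * h y) y + vderiv i (\<lambda>y. w y * dv h y) y)"
      using Suc.prems sw sh by (intro vderiv_add smooth_mult)
    finally have "vderiv (Suc i) (\<lambda>y. w y * h y) x = vderiv i (\<lambda>y. dv w y * h y) x + vderiv i (\<lambda>y. w y * dv h y) x"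
      by simp
    moreover have z1: "vderiv (Suc i) (\<lambda>y. w y * h y) x = 0" using Suc.prems(4) i by blast
    moreover have z2: "vderiv i (\<lambda>y. dv w y * h y) x = 0" using a i by blast
    ultimately show "vderiv i (\<lambda>y. w y * dv h y) x = 0" by simp
  qed
  have c: "\<forall>i<m. vderiv i (dv h) x = 0" by (rule Suc.IH[OF Suc.prems(1) sh Suc.prems(3) b])
  show ?case
  proof (intro allI impI)
    fix i assume "i < Suc m"
    then show "vderiv i h x = 0"
    proof (cases i)
      case 0
      have "w x * h x = 0" using Suc.prems(4) by (metis vderiv.simps(1) zero_less_Suc)
      then show ?thesis using 0 Suc.prems(3) by simp
    next
      case (Suc i') then have "vderiv i' (dv h) x = 0" using c \<open>i < Suc m\<close> by simp
      then show ?thesis unfolding Suc vderiv_Suc' .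
    qed
  qed
qed

lemma Zb_mult:
  assumes "smooth_fun w" "smooth_fun h" "\<And>x. x \<in> {a..b} \<Longrightarrow> w x \<noteq> 0" "Zb h a b K"
  shows "Zb (\<lambda>x. w x * h x) a b K"
  using assms(4) unfolding Zb_def
proof (intro allI impI)
  fix S m assume H: "\<forall>S m. finite S \<and> S \<subseteq> {a..b} \<and> (\<forall>x\<in>S. \<forall>i<m x. vderiv i h x = 0) \<longrightarrow> sum m S \<le> K"
    and h: "finite S \<and> S \<subseteq> {a..b} \<and> (\<forall>x\<in>S. \<forall>i<m x. vderiv i (\<lambda>x. w x * h x) x = 0)"
  have "\<forall>x\<in>S. \<forall>i<m x. vderiv i h x = 0"
    using h local_div[OF assms(1,2)] assms(3) by blast
  then show "sum m S \<le> K" using H h by blast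
qed

lemma realf_iff: "realf f \<longleftrightarrow> (\<lambda>x. cnj (f x)) = f"
  unfolding realf_def by (auto simp: fun_eq_iff complex_eq_iff)

lemma realf_dv: assumes "realf f" "\<And>x. f differentiable (at x)" shows "realf (dv f)"
proof -
  have "dv f x = cnj (dv f x)" for x
  proof -
    have "dv f x = dv (\<lambda>x. cnj (f x)) x" using assms(1) by (simp add: realf_iff)
    also have "\<dots> = cnj (dv f x)" by (rule dv_cnj[OF assms(2)])
    finally show ?thesis .
  qed
  then show ?thesis unfolding realf_def by (metis cnj.simps(2) complex.expand neg_equal_zero cnj.simps(1))
qed

lemma real_of_realf: "realf f \<Longrightarrow> f x = of_real (Re (f x))"
  unfolding realf_def by (simp add: complex_eq_iff)

lemma rolle_step:
  assumes sp: "smooth_fun \<phi>" and sw: "smooth_fun w" and rp: "realf \<phi>" and rw: "realf w"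
    and pos: "\<And>x. x \<in> {x1..x2} \<Longrightarrow> Re (w x) > 0"
    and x12: "x1 < x2" and z1: "\<phi> x1 = 0" and z2: "\<phi> x2 = 0"
  shows "\<exists>\<xi>. x1 < \<xi> \<and> \<xi> < x2 \<and> w \<xi> * dv \<phi> \<xi> - dv w \<xi> * \<phi> \<xi> = 0"
proof -
  define g where "g = (\<lambda>x. Re (\<phi> x) / Re (w x))"
  define G where "G = (\<lambda>x. (Re (dv \<phi> x) * Re (w x) - Re (\<phi> x) * Re (dv w x)) / (Re (w x) * Re (w x)))"
  have dg: "(g has_real_derivative G x) (at x)" if "x \<in> {x1..x2}" for x
  proof -
    have "((\<lambda>x. Re (\<phi> x)) has_real_derivative Re (dv \<phi> x)) (at x)"
      by (intro has_field_derivative_Re smooth_hvd sp)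
    moreover have "((\<lambda>x. Re (w x)) has_real_derivative Re (dv w x)) (at x)"
      by (intro has_field_derivative_Re smooth_hvd sw)
    ultimately show ?thesis unfolding g_def G_def
      using pos[OF that] smooth_hvd[OF sp] smooth_hvd[OF sw] by (auto intro!: derivative_eq_intros simp: power2_eq_square)
  qed
  have "continuous_on {x1..x2} g"
    using dg by (meson DERIV_continuous continuous_at_imp_continuous_on)
  moreover have "\<And>x. x1 < x \<Longrightarrow> x < x2 \<Longrightarrow> (g has_derivative (\<lambda>h. G x * h)) (at x)"
    using dg by (auto simp: has_field_derivative_def)
  moreover have "g x1 = g x2" using z1 z2 by (simp add: g_def)
  ultimately obtain z where z: "x1 < z" "z < x2" "(\<lambda>h. G z * h) = (\<lambda>v. 0)"
    using Rolle_deriv[OF x12, of g "\<lambda>x h. G x * h"] by blast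
  then have "G z = 0" by (metis mult_1_right)
  moreover have "Re (w z) > 0" using pos z by auto
  ultimately have re0: "Re (dv \<phi> z) * Re (w z) - Re (\<phi> z) * Re (dv w z) = 0"
    by (simp add: G_def)
  have rdp: "realf (dv \<phi>)" and rdw: "realf (dv w)"
    using realf_dv rp rw sp sw smooth_differentiable by blast+
  have "w z * dv \<phi> z - dv w z * \<phi> z = 0"
    using re0 rp rw rdp rdw unfolding realf_def by (simp add: complex_eq_iff algebra_simps)
  then show ?thesis using z by blast
qed

lemma zero_transfer:
  assumes sp: "smooth_fun \<phi>" and sw: "smooth_fun w" and z: "\<forall>i<Suc k. vderiv i \<phi> x = 0"
  shows "\<forall>i<k. vderiv i (\<lambda>x. w x * dv \<phi> x - dv w x * \<phi> x) x = 0"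
proof -
  have s1: "smooth_fun (\<lambda>x. w x * dv \<phi> x)" "smooth_fun (\<lambda>x. dv w x * \<phi> x)"
    using sp sw by (auto intro: smooth_mult smooth_dv)
  have a: "\<forall>i<k. vderiv i (\<lambda>x. w x * dv \<phi> x) x = 0"
    by (rule leibniz_zero[OF sw smooth_dv[OF sp]]) (use z in \<open>auto simp flip: vderiv_Suc'\<close>)
  have b: "\<forall>i<k. vderiv i (\<lambda>x. dv w x * \<phi> x) x = 0"
    by (rule leibniz_zero[OF smooth_dv[OF sw] sp]) (use z in auto)
  show ?thesis using a b by (simp add: vderiv_diff[OF s1])
qed



lemma rolle_count_aux:
  assumes sp: "smooth_fun \<phi>" and sw: "smooth_fun w" and rp: "realf \<phi>" and rw: "realf w"
    and pos: "\<And>x. x \<in> {a..b} \<Longrightarrow> Re (w x) > 0"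
    and fin: "finite A"
  shows "A \<noteq> {} \<longrightarrow> A \<subseteq> {a..b} \<longrightarrow> (\<forall>x\<in>A. 0 < m x \<and> (\<forall>i<m x. vderiv i \<phi> x = 0)) \<longrightarrow>
     (\<exists>S' m'. finite S' \<and> S' \<subseteq> {a..Max A} \<and>
        (\<forall>x\<in>S'. \<forall>i<m' x. vderiv i (\<lambda>x. w x * dv \<phi> x - dv w x * \<phi> x) x = 0) \<and>
        sum m A \<le> sum m' S' + 1)"
  using fin
proof (induction A rule: finite_linorder_max_induct)
  case empty then show ?case by simp
next
  case (insert s A)
  let ?u = "\<lambda>x. w x * dv \<phi> x - dv w x * \<phi> x"
  show ?case
  proof (intro impI)
    assume ne: "insert s A \<noteq> {}" and sub: "insert s A \<subseteq> {a..b}"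
      and Z: "\<forall>x\<in>insert s A. 0 < m x \<and> (\<forall>i<m x. vderiv i \<phi> x = 0)"
    have ms: "0 < m s" and zs: "\<forall>i<Suc (m s - 1). vderiv i \<phi> s = 0" using Z by auto
    have zt_s: "\<forall>i<m s - 1. vderiv i ?u s = 0" by (rule zero_transfer[OF sp sw zs])
    have sA: "s \<notin> A" using insert.hyps by auto
    have Maxi: "Max (insert s A) = s"
      using insert.hyps by (intro Max_eqI) auto
    show "\<exists>S' m'. finite S' \<and> S' \<subseteq> {a..Max (insert s A)} \<and>
        (\<forall>x\<in>S'. \<forall>i<m' x. vderiv i ?u x = 0) \<and> sum m (insert s A) \<le> sum m' S' + 1"
    proof (cases "A = {}")
      case True
      have "a \<le> s" using sub by auto
      then have "{s} \<subseteq> {a..Max (insert s A)}" using Maxi by auto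
      moreover have "\<forall>x\<in>{s}. \<forall>i<(\<lambda>_. m s - 1) x. vderiv i ?u x = 0" using zt_s by simp
      moreover have "sum m (insert s A) \<le> sum (\<lambda>_. m s - 1) {s} + 1" using True ms by simp
      ultimately show ?thesis by (intro exI[of _ "{s}"] exI[of _ "\<lambda>_. m s - 1"] conjI) auto
    next
      case False
      obtain S' m' where S': "finite S'" "S' \<subseteq> {a..Max A}"
        "\<forall>x\<in>S'. \<forall>i<m' x. vderiv i ?u x = 0" "sum m A \<le> sum m' S' + 1"
      proof -
        have a1: "A \<subseteq> {a..b}" using sub by blast
        have a2: "\<forall>x\<in>A. 0 < m x \<and> (\<forall>i<m x. vderiv i \<phi> x = 0)" using Z by blast
        show ?thesis using mp[OF mp[OF mp[OF insert.IH False] a1] a2] that by blast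
      qed
      define t where "t = Max A"
      have tA: "t \<in> A" using False insert.hyps(1) t_def by simp
      have ts: "t < s" using insert.hyps tA by auto
      have ta: "a \<le> t" using sub tA by auto
      have sb: "s \<le> b" using sub by auto
      have z1: "\<phi> t = 0" using Z tA by (metis insertI2 vderiv.simps(1))
      have z2: "\<phi> s = 0" using Z by (metis insertI1 vderiv.simps(1))
      obtain \<xi> where xi: "t < \<xi>" "\<xi> < s" "?u \<xi> = 0"
      proof -
        have "\<And>x. x \<in> {t..s} \<Longrightarrow> Re (w x) > 0" using pos ta sb by auto
        from rolle_step[OF sp sw rp rw this ts z1 z2] show ?thesis using that by blast
      qed
      have xS: "\<xi> \<notin> S'" "s \<notin> S'" using S'(2) xi ts t_def by auto
      define m'' where "m'' = (\<lambda>x. if x = s then m s - 1 else if x = \<xi> then 1 else m' x)"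
      have "sum m'' (insert s (insert \<xi> S')) = (m s - 1) + (1 + sum m'' S')"
        using xS xi S'(1) by (simp add: m''_def)
      also have "sum m'' S' = sum m' S'"
        using xS by (intro sum.cong) (auto simp: m''_def)
      finally have sm: "sum m'' (insert s (insert \<xi> S')) = m s + sum m' S'" using ms by simp
      have "sum m (insert s A) = m s + sum m A" using insert.hyps sA by simp
      then have le: "sum m (insert s A) \<le> sum m'' (insert s (insert \<xi> S')) + 1" using sm S'(4) by simp
      have valid: "\<forall>x\<in>insert s (insert \<xi> S'). \<forall>i<m'' x. vderiv i ?u x = 0"
        using zt_s xi S'(3) xS by (auto simp: m''_def)
      have "insert s (insert \<xi> S') \<subseteq> {a..Max (insert s A)}"
        using Maxi S'(2) xi ta ts t_def by auto
      then show ?thesis using le valid S'(1)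
        by (intro exI[of _ "insert s (insert \<xi> S')"] exI[of _ m''] conjI) auto
    qed
  qed
qed

lemma rolle_count:
  assumes sp: "smooth_fun \<phi>" and sw: "smooth_fun w" and rp: "realf \<phi>" and rw: "realf w"
    and pos: "\<And>x. x \<in> {a..b} \<Longrightarrow> Re (w x) > 0"
    and Z: "Zb (\<lambda>x. w x * dv \<phi> x - dv w x * \<phi> x) a b K"
  shows "Zb \<phi> a b (Suc K)"
  unfolding Zb_def
proof (intro allI impI)
  fix S m assume h: "finite S \<and> S \<subseteq> {a..b} \<and> (\<forall>x\<in>S. \<forall>i<m x. vderiv i \<phi> x = 0)"
  define S0 where "S0 = {x\<in>S. 0 < m x}"
  have fin0: "finite S0" using h S0_def by simp
  have "sum m S = sum m S0"
    unfolding S0_def using h by (intro sum.mono_neutral_right) auto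
  moreover have "sum m S0 \<le> Suc K"
  proof (cases "S0 = {}")
    case True then show ?thesis by simp
  next
    case False
    have sub0: "S0 \<subseteq> {a..b}" using h S0_def by auto
    moreover have Z0: "\<forall>x\<in>S0. 0 < m x \<and> (\<forall>i<m x. vderiv i \<phi> x = 0)" using h S0_def by auto
    note ex = mp[OF mp[OF mp[OF rolle_count_aux[OF sp sw rp rw pos fin0, where m=m] False] sub0] Z0]
    from ex obtain S' m' where S': "finite S'" "S' \<subseteq> {a..Max S0}"
        "\<forall>x\<in>S'. \<forall>i<m' x. vderiv i (\<lambda>x. w x * dv \<phi> x - dv w x * \<phi> x) x = 0" "sum m S0 \<le> sum m' S' + 1"
      by blast
    have "Max S0 \<le> b" using False fin0 \<open>S0 \<subseteq> {a..b}\<close> by (meson Max_in atLeastAtMost_iff subsetD)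
    then have "S' \<subseteq> {a..b}" using S'(2) by auto
    then have "sum m' S' \<le> K" using Z[unfolded Zb_def, rule_format, of S' m'] S'(1,3) by blast
    then show ?thesis using S'(4) by simp
  qed
  ultimately show "sum m S \<le> Suc K" by simp
qed



lemma kernel1:
  assumes "\<And>x. f differentiable (at x)" "shift_op c f = (\<lambda>x. 0)" "f \<noteq> (\<lambda>x. 0)"
  shows "Zb f a b 0"
proof -
  have e: "f x = f 0 * exp (c * of_real x)" for x by (rule first_order[OF assms(1,2)])
  have "f 0 \<noteq> 0"
  proof
    assume f0: "f 0 = 0"
    have "f x = 0" for x using e[of x] f0 by simp
    then have "f = (\<lambda>x. 0)" by (rule ext)
    then show False using assms(3) by simp
  qed
  then have "f x \<noteq> 0" for x using e[of x] by simp
  then show ?thesis by (intro Zb_nonzero)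
qed

lemma uniq2:
  assumes sf: "smooth_fun f" and z: "shift_op m2 (shift_op m1 f) = (\<lambda>x. 0)"
    and f0: "f x0 = 0" and d0: "dv f x0 = 0"
  shows "f = (\<lambda>x. 0)"
proof -
  let ?g = "shift_op m1 f"
  have sg: "smooth_fun ?g" by (rule smooth_shift[OF sf])
  have eg: "?g x = ?g 0 * exp (m2 * of_real x)" for x
    by (rule first_order[OF smooth_differentiable[OF sg] z])
  have "?g x0 = 0" using f0 d0 by (simp add: shift_op_alt)
  then have "?g 0 = 0" using eg[of x0] by simp
  then have "?g x = 0" for x using eg[of x] by simp
  then have g0: "?g = (\<lambda>x. 0)" by (rule ext)
  have ef: "f x = f 0 * exp (m1 * of_real x)" for x
    by (rule first_order[OF smooth_differentiable[OF sf] g0])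
  have "f 0 = 0" using f0 ef[of x0] by simp
  then have "f x = 0" for x using ef[of x] by simp
  then show ?thesis by (rule ext)
qed

lemma realf_shift: "smooth_fun f \<Longrightarrow> realf f \<Longrightarrow> Im c = 0 \<Longrightarrow> realf (shift_op c f)"
  using realf_dv[of f] smooth_differentiable[of f] unfolding realf_def shift_op_alt by auto

lemma real_step:
  assumes sf: "smooth_fun f" and rf: "realf f" and c: "Im c = 0" and Z: "Zb (shift_op c f) a b K"
  shows "Zb f a b (Suc K)"
proof -
  define w where "w = (\<lambda>x. exp (c * of_real x))"
  have sw: "smooth_fun w" unfolding w_def by (rule smooth_exp)
  have rw: "realf w" unfolding w_def realf_def using c by (simp add: Im_exp)
  have pos: "Re (w x) > 0" for x unfolding w_def using c by (simp add: Re_exp)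
  have dw: "dv w x = c * w x" for x unfolding w_def by (rule vector_derivative_at[OF hvd_exp])
  have e: "(\<lambda>x. w x * dv f x - dv w x * f x) = (\<lambda>x. w x * shift_op c f x)"
    by (auto simp: dw shift_op_alt algebra_simps)
  have "Zb (\<lambda>x. w x * shift_op c f x) a b K"
    by (intro Zb_mult sw smooth_shift sf Z) (simp add: w_def)
  then have "Zb (\<lambda>x. w x * dv f x - dv w x * f x) a b K" unfolding e .
  then show ?thesis by (intro rolle_count[OF sf sw rf rw]) (simp_all add: pos)
qed

lemma realf_mult: "realf f \<Longrightarrow> realf g \<Longrightarrow> realf (\<lambda>x. f x * g x)"
  unfolding realf_def by simp

lemma realf_diff: "realf f \<Longrightarrow> realf g \<Longrightarrow> realf (\<lambda>x. f x - g x)"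
  unfolding realf_def by simp

lemma pair_step:
  assumes sf: "smooth_fun f" and rf: "realf f" and nf: "f \<noteq> (\<lambda>x. 0)"
    and beta: "Im l \<noteq> 0" and len: "\<bar>Im l\<bar> * (b - a) < pi" and ab: "a \<le> b"
  shows "(shift_op (cnj l) (shift_op l f) = (\<lambda>x. 0) \<longrightarrow> Zb f a b 1) \<and>
         (Zb (shift_op (cnj l) (shift_op l f)) a b K \<longrightarrow> Zb f a b (Suc (Suc K)))"
proof -
  define h where "h = shift_op (cnj l) (shift_op l f)"
  define c0 where "c0 = (a + b) / 2"
  define C0 where "C0 = exp (- l * of_real c0) / 2"
  define E where "E = (\<lambda>x. C0 * exp (l * of_real x))"
  define w where "w = (\<lambda>x. E x + cnj (E x))"
  have sE: "smooth_fun E" unfolding E_def by (intro smooth_cmult smooth_exp)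
  have dE: "dv E x = l * E x" for x unfolding E_def using dv_exp[of C0 l x] by (simp add: mult_ac)
  have sw: "smooth_fun w" unfolding w_def by (intro smooth_add smooth_cnj sE)
  have dw: "dv w = (\<lambda>x. l * E x + cnj (l * E x))"
    unfolding w_def using sE by (auto intro!: ext simp: dv_add dv_cnj diff_cnj smooth_differentiable dE)
  have ddw: "dv (dv w) x = l * (l * E x) + cnj (l * (l * E x))" for x
    unfolding dw using sE
    by (simp add: dv_add dv_cnj dv_cmult diff_cnj diff_cmult smooth_differentiable dE)
  have rw: "realf w" unfolding realf_def w_def by simp
  have pos: "Re (w x) > 0" if "x \<in> {a..b}" for x
  proof -
    have z: "E x = exp (l * of_real (x - c0)) / 2"
      unfolding E_def C0_def by (simp add: exp_add[symmetric] algebra_simps)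
    have "Re (w x) = 2 * Re (E x)" by (simp add: w_def)
    also have "\<dots> = Re (exp (l * of_real (x - c0)))" unfolding z by simp
    also have "\<dots> = exp (Re l * (x - c0)) * cos (Im l * (x - c0))"
    proof -
      have "\<And>r. Re (exp (l * of_real r)) = exp (Re l * r) * cos (Im l * r)"
        by (simp add: Re_exp)
      then show ?thesis by blast
    qed
    finally have "Re (w x) = exp (Re l * (x - c0)) * cos (Im l * (x - c0))" .
    moreover have "\<bar>Im l * (x - c0)\<bar> < pi / 2"
    proof -
      have l1: "- ((b - a) / 2) \<le> x - c0" "x - c0 \<le> (b - a) / 2" using that unfolding c0_def atLeastAtMost_iff by (simp_all add: field_simps)
      then have "\<bar>x - c0\<bar> \<le> (b - a) / 2" by (intro abs_leI) linarith+
      then have "\<bar>Im l * (x - c0)\<bar> \<le> \<bar>Im l\<bar> * ((b - a) / 2)"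
        unfolding abs_mult by (intro mult_left_mono) simp_all
      then show ?thesis using len by simp
    qed
    then have "cos (Im l * (x - c0)) > 0" by (intro cos_gt_zero_pi) auto
    ultimately show ?thesis by simp
  qed
  have wnz: "w x \<noteq> 0" if "x \<in> {a..b}" for x using pos[OF that] by auto
  define u where "u = (\<lambda>x. w x * dv f x - dv w x * f x)"
  have sdf: "smooth_fun (dv f)" and sdw: "smooth_fun (dv w)" using sf sw by (auto intro: smooth_dv)
  have su: "smooth_fun u" unfolding u_def by (intro smooth_diff smooth_mult sw sdf sdw sf)
  have rdf: "realf (dv f)" using realf_dv[OF rf] smooth_differentiable[OF sf] by blast
  have rdw: "realf (dv w)" using realf_dv[OF rw] smooth_differentiable[OF sw] by blast
  have ru: "realf u" unfolding u_def by (intro realf_diff realf_mult rw rdf rdw rf)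
  define s where "s = l + cnj l"
  define w2 where "w2 = (\<lambda>x. exp (s * of_real x))"
  have sw2: "smooth_fun w2" unfolding w2_def by (rule smooth_exp)
  have rs: "Im s = 0" unfolding s_def by simp
  have rw2: "realf w2" unfolding w2_def realf_def using rs by (simp add: Im_exp)
  have pos2: "Re (w2 x) > 0" for x unfolding w2_def using rs by (simp add: Re_exp)
  have dw2: "dv w2 x = s * w2 x" for x unfolding w2_def by (rule vector_derivative_at[OF hvd_exp])
  have du: "dv u x = w x * dv (dv f) x - dv (dv w) x * f x" for x
  proof -
    have d1: "(\<lambda>x. w x * dv f x) differentiable (at x)" "(\<lambda>x. dv w x * f x) differentiable (at x)"
      by (rule diff_mult[OF smooth_differentiable[OF sw] smooth_differentiable[OF sdf]],
          rule diff_mult[OF smooth_differentiable[OF sdw] smooth_differentiable[OF sf]])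
    show ?thesis unfolding u_def
      using sw sf sdf sdw d1 by (simp add: dv_diff dv_mult smooth_differentiable algebra_simps)
  qed
  have dsh: "dv (shift_op l f) x = dv (dv f) x - l * dv f x" for x
  proof -
    have e1: "dv (\<lambda>x. dv f x - l * f x) x = dv (dv f) x - dv (\<lambda>x. l * f x) x"
      by (rule dv_diff[OF smooth_differentiable[OF sdf] diff_cmult[OF smooth_differentiable[OF sf]]])
    have e2: "dv (\<lambda>x. l * f x) x = l * dv f x" by (rule dv_cmult[OF smooth_differentiable[OF sf]])
    show ?thesis unfolding shift_op_alt e1 e2 ..
  qed
  have hx: "h x = dv (dv f) x - l * dv f x - cnj l * (dv f x - l * f x)" for x
    unfolding h_def shift_op_alt[of "cnj l"] dsh by (simp add: shift_op_alt)
  have key: "shift_op s u = (\<lambda>x. w x * h x)"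
  proof
    fix x
    have dwx: "dv w x = l * E x + cnj (l * E x)" using fun_cong[OF dw, of x] by simp
    have "shift_op s u x = dv u x - s * u x" by (simp add: shift_op_alt)
    also have "\<dots> = w x * dv (dv f) x - dv (dv w) x * f x - s * (w x * dv f x - dv w x * f x)"
      unfolding du by (simp add: u_def)
    also have "\<dots> = w x * h x" unfolding ddw dwx hx s_def
      by (simp add: w_def algebra_simps)
    finally show "shift_op s u x = w x * h x" .
  qed
  have u2: "(\<lambda>x. w2 x * dv u x - dv w2 x * u x) = (\<lambda>x. (w2 x * w x) * h x)"
  proof
    fix x
    have "shift_op s u x = w x * h x" using key by simp
    then have "dv u x - s * u x = w x * h x" by (simp add: shift_op_alt)
    have "w2 x * dv u x - dv w2 x * u x = w2 x * (dv u x - s * u x)" by (simp add: dw2 algebra_simps)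
    also have "\<dots> = (w2 x * w x) * h x" using \<open>dv u x - s * u x = w x * h x\<close> by simp
    finally show "w2 x * dv u x - dv w2 x * u x = (w2 x * w x) * h x" .
  qed
  have nz2: "w2 x * w x \<noteq> 0" if "x \<in> {a..b}" for x
    using wnz[OF that] unfolding w2_def by simp
  have part2: "Zb h a b K \<longrightarrow> Zb f a b (Suc (Suc K))"
  proof
    assume "Zb h a b K"
    then have "Zb (\<lambda>x. (w2 x * w x) * h x) a b K"
      using nz2 by (intro Zb_mult smooth_mult sw2 sw) (auto simp: h_def intro: smooth_shift sf)
    then have "Zb (\<lambda>x. w2 x * dv u x - dv w2 x * u x) a b K" unfolding u2 .
    then have "Zb u a b (Suc K)" by (intro rolle_count[OF su sw2 ru rw2]) (simp_all add: pos2)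
    then have "Zb (\<lambda>x. w x * dv f x - dv w x * f x) a b (Suc K)" unfolding u_def .
    then show "Zb f a b (Suc (Suc K))" by (intro rolle_count[OF sf sw rf rw pos])
  qed
  have part1: "h = (\<lambda>x. 0) \<longrightarrow> Zb f a b 1"
  proof
    assume h0: "h = (\<lambda>x. 0)"
    then have ks: "shift_op s u = (\<lambda>x. 0)" using key by simp
    have eu: "u x = u 0 * exp (s * of_real x)" for x
      by (rule first_order[OF smooth_differentiable[OF su] ks])
    show "Zb f a b 1"
    proof (cases "u 0 = 0")
      case False
      then have "u x \<noteq> 0" for x using eu[of x] by simp
      then have "Zb u a b 0" by (intro Zb_nonzero)
      then have "Zb (\<lambda>x. w x * dv f x - dv w x * f x) a b 0" unfolding u_def .
      then have "Zb f a b (Suc 0)" by (intro rolle_count[OF sf sw rf rw pos])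
      then show ?thesis by simp
    next
      case True
      then have u0: "u x = 0" for x using eu[of x] by simp
      have "f x \<noteq> 0" if x: "x \<in> {a..b}" for x
      proof
        assume fx: "f x = 0"
        then have "w x * dv f x = 0" using u0[of x] by (simp add: u_def)
        then have "dv f x = 0" using wnz[OF x] by simp
        moreover have "shift_op (cnj l) (shift_op l f) = (\<lambda>x. 0)" using h0 unfolding h_def .
        ultimately have "f = (\<lambda>x. 0)" using uniq2[OF sf _ fx] by blast
        then show False using nf by simp
      qed
      then have "Zb f a b 0" by (rule Zb_nonzero)
      then show ?thesis by (rule Zb_mono) simp
    qed
  qed
  show ?thesis using part1 part2 h_def by simp
qed



lemma K_zero:
  assumes KK: "\<And>x. K * exp (l * of_real x) = cnj K * exp (cnj l * of_real x)" and b: "Im l \<noteq> 0"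
  shows "K = 0"
proof -
  have K2: "K * exp ((l - cnj l) * of_real x) = cnj K" for x
  proof -
    have "K * exp ((l - cnj l) * of_real x) = K * exp (l * of_real x) / exp (cnj l * of_real x)"
      by (simp add: left_diff_distrib exp_diff)
    also have "\<dots> = cnj K" unfolding KK by simp
    finally show ?thesis .
  qed
  have k0: "K = cnj K" using K2[of 0] by simp
  define t where "t = pi / (2 * Im l)"
  have "(l - cnj l) * of_real t = \<i> * of_real pi"
    unfolding complex_diff_cnj t_def using b by (simp add: field_simps)
  then have "- K = cnj K" using K2[of t] by simp
  then have "- K = K" using k0[symmetric] by simp
  then have "K + K = 0" by (metis add.left_inverse)
  then show ?thesis by simp
qed

lemma caseB:
  assumes sf: "smooth_fun f" and rf: "realf f" and z: "diff_op lam (Suc m) f = (\<lambda>x. 0)"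
    and nr: "Im (lam (Suc m)) \<noteq> 0" and nc: "\<And>k. k \<le> m \<Longrightarrow> lam k \<noteq> cnj (lam (Suc m))"
  shows "diff_op lam m f = (\<lambda>x. 0)"
proof -
  define l where "l = lam (Suc m)"
  define u where "u = diff_op lam m f"
  have su: "smooth_fun u" unfolding u_def by (rule smooth_diff_op[OF sf])
  have "shift_op l u = (\<lambda>x. 0)" unfolding l_def u_def using diff_op_Suc_outer[OF sf] z by simp
  then have eu: "u x = u 0 * exp (l * of_real x)" for x by (rule first_order[OF smooth_differentiable[OF su]])
  then have ue: "u = (\<lambda>x. u 0 * exp (l * of_real x))" by (rule ext)
  define lamc where "lamc = (\<lambda>j. cnj (lam j))"
  define v where "v = diff_op lamc m f"
  have "v = diff_op lamc m (\<lambda>x. cnj (f x))" unfolding v_def using rf by (simp add: realf_iff)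
  also have "\<dots> = (\<lambda>x. cnj (u x))" unfolding lamc_def u_def by (rule diff_op_cnj[OF sf])
  also have "\<dots> = (\<lambda>x. cnj (u 0) * exp (cnj l * of_real x))"
    by (rule ext) (subst eu, simp add: exp_cnj)
  finally have ve: "v = (\<lambda>x. cnj (u 0) * exp (cnj l * of_real x))" .
  have comm: "diff_op lamc m u = diff_op lam m v"
    unfolding u_def v_def by (rule diff_op_commute[OF sf])
  define P where "P = (\<Prod>j\<le>m. (l - lamc j))"
  have c1: "diff_op lamc m u = (\<lambda>x. (u 0 * P) * exp (l * of_real x))"
    unfolding P_def by (subst ue) (rule diff_op_exp)
  have c2: "diff_op lam m v = (\<lambda>x. (cnj (u 0) * (\<Prod>j\<le>m. (cnj l - lam j))) * exp (cnj l * of_real x))"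
    unfolding ve by (rule diff_op_exp)
  have c3: "(\<Prod>j\<le>m. (cnj l - lam j)) = cnj P"
    unfolding P_def lamc_def by (simp add: cnj_prod)
  have KK: "(u 0 * P) * exp (l * of_real x) = cnj (u 0 * P) * exp (cnj l * of_real x)" for x
  proof -
    have "(u 0 * P) * exp (l * of_real x) = diff_op lamc m u x" unfolding c1 ..
    also have "\<dots> = diff_op lam m v x" unfolding comm ..
    also have "\<dots> = (cnj (u 0) * cnj P) * exp (cnj l * of_real x)" unfolding c2 c3 ..
    finally show ?thesis by simp
  qed
  have "u 0 * P = 0" by (rule K_zero[OF KK]) (simp add: l_def nr)
  moreover have "P \<noteq> 0"
  proof
    assume "P = 0"
    then obtain j where "j \<le> m" "l - lamc j = 0" unfolding P_def by (auto simp: prod_zero_iff)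
    then have "l = cnj (lam j)" unfolding lamc_def by simp
    then have "lam j = cnj (lam (Suc m))" unfolding l_def by simp
    then show False using nc[OF \<open>j \<le> m\<close>] by simp
  qed
  ultimately have "u 0 = 0" by simp
  then have "u x = 0" for x using eu[of x] by simp
  then show ?thesis unfolding u_def[symmetric] by (rule ext)
qed

lemma realf_pair:
  assumes sf: "smooth_fun f" and rf: "realf f"
  shows "realf (shift_op (cnj l) (shift_op l f))"
proof -
  have sdf: "smooth_fun (dv f)" by (rule smooth_dv[OF sf])
  have dsh: "dv (shift_op l f) x = dv (dv f) x - l * dv f x" for x
  proof -
    have e1: "dv (\<lambda>x. dv f x - l * f x) x = dv (dv f) x - dv (\<lambda>x. l * f x) x"
      by (rule dv_diff[OF smooth_differentiable[OF sdf] diff_cmult[OF smooth_differentiable[OF sf]]])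
    have e2: "dv (\<lambda>x. l * f x) x = l * dv f x" by (rule dv_cmult[OF smooth_differentiable[OF sf]])
    show ?thesis unfolding shift_op_alt e1 e2 ..
  qed
  have rdf: "realf (dv f)" using realf_dv[OF rf] smooth_differentiable[OF sf] by blast
  have rddf: "realf (dv (dv f))" using realf_dv[OF rdf] smooth_differentiable[OF sdf] by blast
  have "shift_op (cnj l) (shift_op l f) x = dv (dv f) x - (l + cnj l) * dv f x + (l * cnj l) * f x" for x
    unfolding shift_op_alt[of "cnj l"] dsh by (simp add: shift_op_alt algebra_simps)
  moreover have "Im (dv (dv f) x - (l + cnj l) * dv f x + (l * cnj l) * f x) = 0" for x
    using rf rdf rddf unfolding realf_def by simp
  ultimately show ?thesis unfolding realf_def by simp
qed

lemma no_real_kernel: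
  assumes sf: "smooth_fun f" and rf: "realf f" and nr: "Im l \<noteq> 0" and z: "shift_op l f = (\<lambda>x. 0)"
  shows "f = (\<lambda>x. 0)"
proof
  fix x
  have rdf: "realf (dv f)" using realf_dv[OF rf] smooth_differentiable[OF sf] by blast
  have "dv f x = l * f x" using fun_cong[OF z, of x] by (simp add: shift_op_alt)
  moreover have "Im (dv f x) = 0" using rdf unfolding realf_def by blast
  ultimately have "Im (l * f x) = 0" by simp
  then have "Im l * Re (f x) = 0" using rf unfolding realf_def by simp
  then have "Re (f x) = 0" using nr by simp
  then show "f x = 0" using rf unfolding realf_def by (simp add: complex_eq_iff)
qed



lemma main_real:
  fixes M a b :: real
  assumes ab: "a \<le> b" and HM: "M = 0 \<or> (b - a) * M < pi"
  shows "\<forall>lam f. (\<forall>j\<le>n. \<bar>Im (lam j)\<bar> \<le> M) \<longrightarrow> smooth_fun f \<longrightarrow> realf f \<longrightarrow> f \<noteq> (\<lambda>x. 0)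
           \<longrightarrow> diff_op lam n f = (\<lambda>x. 0) \<longrightarrow> Zb f a b n"
proof (induction n rule: less_induct)
  case (less n)
  show ?case
  proof (intro allI impI)
    fix lam f
    assume bd: "\<forall>j\<le>n. \<bar>Im (lam j)\<bar> \<le> M" and sf: "smooth_fun f" and rf: "realf f"
      and nf: "f \<noteq> (\<lambda>x. 0)" and z: "diff_op lam n f = (\<lambda>x. 0)"
    have IH: "Zb g a b m" if "m < n" "\<forall>j\<le>m. \<bar>Im (lam' j)\<bar> \<le> M" "smooth_fun g" "realf g"
      "g \<noteq> (\<lambda>x. 0)" "diff_op lam' m g = (\<lambda>x. 0)" for m lam' g
      using less.IH[OF that(1)] that(2-) by blast
    show "Zb f a b n"
    proof (cases "Im (lam n) = 0")
      case R: True
      show ?thesis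
      proof (cases n)
        case 0
        then have "shift_op (lam 0) f = (\<lambda>x. 0)" using z by simp
        then show ?thesis using kernel1[OF smooth_differentiable[OF sf] _ nf] 0 by blast
      next
        case (Suc m)
        define h where "h = shift_op (lam n) f"
        have zh: "diff_op lam m h = (\<lambda>x. 0)" using z unfolding h_def Suc by simp
        show ?thesis
        proof (cases "h = (\<lambda>x. 0)")
          case True
          then have "Zb f a b 0" unfolding h_def by (rule kernel1[OF smooth_differentiable[OF sf] _ nf])
          then show ?thesis by (rule Zb_mono) simp
        next
          case False
          have "Zb h a b m"
            by (rule IH[of m lam h]) (use Suc bd False zh sf rf R in \<open>auto simp: h_def intro: smooth_shift realf_shift\<close>)
          then have "Zb f a b (Suc m)" using real_step[OF sf rf R] unfolding h_def by blast
          then show ?thesis using Suc by simp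
        qed
      qed
    next
      case NR: False
      have Mpos: "M \<noteq> 0" using bd NR by (metis abs_ge_zero abs_zero le_less_trans less_eq_real_def order.refl zero_less_abs_iff)
      have len: "\<bar>Im (lam n)\<bar> * (b - a) < pi"
      proof -
        have "\<bar>Im (lam n)\<bar> * (b - a) \<le> M * (b - a)" using bd ab by (intro mult_right_mono) auto
        then show ?thesis using HM Mpos by (simp add: mult.commute)
      qed
      show ?thesis
      proof (cases "\<exists>k<n. lam k = cnj (lam n)")
        case True
        then obtain k where k: "k < n" "lam k = cnj (lam n)" by blast
        then obtain m where n: "n = Suc m" by (cases n) auto
        define h where "h = shift_op (cnj (lam n)) (shift_op (lam n) f)"
        have PS: "(h = (\<lambda>x. 0) \<longrightarrow> Zb f a b 1) \<and> (Zb h a b (n - 2) \<longrightarrow> Zb f a b (Suc (Suc (n - 2))))"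
          unfolding h_def by (rule pair_step[OF sf rf nf NR len ab])
        show ?thesis
        proof (cases m)
          case 0
          then have "k = 0" using k n by simp
          then have "h = (\<lambda>x. 0)" using z k unfolding h_def n 0 by simp
          then show ?thesis using PS n 0 by simp
        next
          case (Suc m')
          have "diff_op lam n f = diff_op lam (Suc m') (shift_op (lam n) f)" unfolding n Suc by simp
          also have "\<dots> = diff_op (rem k lam) m' (shift_op (lam k) (shift_op (lam n) f))"
            using k n Suc by (intro diff_op_remove smooth_shift sf) simp
          finally have zh: "diff_op (rem k lam) m' h = (\<lambda>x. 0)" using z k unfolding h_def by simp
          show ?thesis
          proof (cases "h = (\<lambda>x. 0)")
            case True
            then have "Zb f a b 1" using PS by simp
            then show ?thesis by (rule Zb_mono) (simp add: n)
          next
            case False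
            have sh: "smooth_fun h" unfolding h_def by (intro smooth_shift sf)
            have rh: "realf h" unfolding h_def by (rule realf_pair[OF sf rf])
            have bd': "\<forall>j\<le>m'. \<bar>Im (rem k lam j)\<bar> \<le> M" using bd n Suc by (auto simp: rem_def)
            have "Zb h a b m'" by (rule IH[OF _ bd' sh rh False zh]) (simp add: n Suc)
            then have "Zb h a b (n - 2)" by (simp add: n Suc)
            then have "Zb f a b (Suc (Suc (n - 2)))" using PS by simp
            then show ?thesis by (simp add: n Suc)
          qed
        qed
      next
        case False
        show ?thesis
        proof (cases n)
          case 0
          then have "shift_op (lam n) f = (\<lambda>x. 0)" using z by simp
          then have "f = (\<lambda>x. 0)" by (rule no_real_kernel[OF sf rf NR])
          then show ?thesis using nf by simp
        next
          case (Suc m)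
          have zm: "diff_op lam m f = (\<lambda>x. 0)"
            by (rule caseB[OF sf rf]) (use z Suc NR False in auto)
          have "Zb f a b m" by (rule IH[OF _ _ sf rf nf zm]) (use bd Suc in auto)
          then show ?thesis by (rule Zb_mono) (simp add: Suc)
        qed
      qed
    qed
  qed
qed



lemma final_helper:
  fixes M a b :: real
  assumes ab: "a \<le> b" and HM: "M = 0 \<or> (b - a) * M < pi" and bd: "\<forall>j\<le>n. \<bar>Im (lam j)\<bar> \<le> M"
    and sg: "smooth_fun g" and rg: "realf g" and ng: "g \<noteq> (\<lambda>x. 0)" and zg: "diff_op lam n g = (\<lambda>x. 0)"
    and S: "finite S" "S \<subseteq> {a..b}" "\<forall>x\<in>S. \<forall>i<m x. vderiv i g x = 0"
  shows "sum m S \<le> n"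
proof -
  have "Zb g a b n" using main_real[OF ab HM, of n] bd sg rg ng zg by blast
  then show ?thesis using S unfolding Zb_def by blast
qed

theorem mainTheorem6:
  fixes lam :: "nat \<Rightarrow> complex" and n :: nat and a b :: real
  assumes "closed_cnj (E_space lam n)"
    and "a < b"
    and "Max {\<bar>Im (lam j)\<bar> | j. j \<le> n} = 0 \<or> b - a < pi / Max {\<bar>Im (lam j)\<bar> | j. j \<le> n}"
  shows "ext_chebyshev (E_space lam n) n {a..b}"
proof -
  define M where "M = Max {\<bar>Im (lam j)\<bar> | j. j \<le> n}"
  have setq: "{\<bar>Im (lam j)\<bar> | j. j \<le> n} = (\<lambda>j. \<bar>Im (lam j)\<bar>) ` {..n}" by auto
  have bd: "\<forall>j\<le>n. \<bar>Im (lam j)\<bar> \<le> M" unfolding M_def setq by (auto intro: Max_ge)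
  have M0: "M \<ge> 0" using bd by (meson abs_ge_zero order_trans le0)
  have HM: "M = 0 \<or> (b - a) * M < pi"
  proof (cases "M = 0")
    case False
    then have "M > 0" using M0 by simp
    moreover have "b - a < pi / M" using assms(3) False unfolding M_def by blast
    ultimately show ?thesis by (simp add: pos_less_divide_eq)
  qed simp
  have ab: "a \<le> b" using assms(2) by simp
  show ?thesis unfolding ext_chebyshev_def
  proof (intro ballI impI allI)
    fix f S m
    assume fE: "f \<in> E_space lam n" and nf: "f \<noteq> (\<lambda>x. 0)"
      and h: "finite S \<and> S \<subseteq> {a..b} \<and> (\<forall>x\<in>S. \<forall>i<m x. vderiv i f x = 0)"
    have sf: "smooth_fun f" and zf: "diff_op lam n f = (\<lambda>x. 0)" using fE by (auto simp: E_space_def)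
    have cE: "(\<lambda>x. cnj (f x)) \<in> E_space lam n" using assms(1) fE unfolding closed_cnj_def by blast
    have scf: "smooth_fun (\<lambda>x. cnj (f x))" and zcf: "diff_op lam n (\<lambda>x. cnj (f x)) = (\<lambda>x. 0)"
      using cE by (auto simp: E_space_def)
    define fr where "fr = (\<lambda>x. (1/2) * (f x + cnj (f x)))"
    define fi where "fi = (\<lambda>x. (- \<i> / 2) * (f x + (-1) * cnj (f x)))"
    have s1: "smooth_fun (\<lambda>x. f x + cnj (f x))" by (intro smooth_add sf scf)
    have s2: "smooth_fun (\<lambda>x. f x + (-1) * cnj (f x))" by (intro smooth_add sf smooth_cmult scf)
    have sfr: "smooth_fun fr" unfolding fr_def by (intro smooth_cmult s1)
    have sfi: "smooth_fun fi" unfolding fi_def by (intro smooth_cmult s2)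
    have zfr: "diff_op lam n fr = (\<lambda>x. 0)"
      unfolding fr_def diff_op_cmult[OF s1] diff_op_add[OF sf scf] zf zcf by simp
    have zfi: "diff_op lam n fi = (\<lambda>x. 0)"
      unfolding fi_def diff_op_cmult[OF s2] diff_op_add[OF sf smooth_cmult[OF scf]] diff_op_cmult[OF scf] zf zcf
      by simp
    have rfr: "realf fr" unfolding realf_def fr_def by simp
    have rfi: "realf fi" unfolding realf_def fi_def by simp
    have vfr: "vderiv i fr x = (1/2) * (vderiv i f x + cnj (vderiv i f x))" for i x
      unfolding fr_def vderiv_cmult[OF s1] vderiv_add[OF sf scf] vderiv_cnj[OF sf] by simp
    have vfi: "vderiv i fi x = (- \<i> / 2) * (vderiv i f x + (-1) * cnj (vderiv i f x))" for i x
      unfolding fi_def vderiv_cmult[OF s2] vderiv_add[OF sf smooth_cmult[OF scf]] vderiv_cmult[OF scf] vderiv_cnj[OF sf]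
      by simp
    have Sr: "\<forall>x\<in>S. \<forall>i<m x. vderiv i fr x = 0" using h by (simp add: vfr)
    have Si: "\<forall>x\<in>S. \<forall>i<m x. vderiv i fi x = 0" using h by (simp add: vfi)
    have "fr \<noteq> (\<lambda>x. 0) \<or> fi \<noteq> (\<lambda>x. 0)"
    proof (rule ccontr)
      assume "\<not> (fr \<noteq> (\<lambda>x. 0) \<or> fi \<noteq> (\<lambda>x. 0))"
      then have a1: "fr x = 0" and a2: "fi x = 0" for x by auto
      have "f x = 0" for x
      proof -
        have "Re (f x) = 0" using a1[of x] unfolding fr_def by (simp add: complex_eq_iff)
        moreover have "Im (f x) = 0" using a2[of x] unfolding fi_def by (simp add: complex_eq_iff)
        ultimately show ?thesis by (simp add: complex_eq_iff)
      qed
      then show False using nf by auto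
    qed
    then show "sum m S \<le> n"
    proof
      assume "fr \<noteq> (\<lambda>x. 0)"
      then show ?thesis using final_helper[OF ab HM bd sfr rfr _ zfr] Sr h by blast
    next
      assume "fi \<noteq> (\<lambda>x. 0)"
      then show ?thesis using final_helper[OF ab HM bd sfi rfi _ zfi] Si h by blast
    qed
  qed
qed

end
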